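(* A real symmetric matrix has symmetric tropical rank one if and only if it has symmetric Kapranov rank one. Equivalently, the $2\times 2$ minors of an $n\times n$ symmetric matrix of indeterminates form a tropical basis.
   Context: Let $\tilde K$ be the field of Hahn series $\sum_{\alpha\in A}c_\alpha t^\alpha$ ($A\subset\mathbb R$ well-ordered, $c_\alpha\in\mathbb C$); for nonzero $a\in\tilde K$, $\deg(a)$ is the smallest exponent with nonzero coefficient. A symmetric lift of a real symmetric $n\times n$ matrix $A$ is a symmetric matrix $\tilde A$ over $\tilde K$ with all entries nonzero and $\deg(\tilde a_{i,j})=A_{i,j}$; the symmetric Kapranov rank of $A$ is the minimum rank of a symmetric lift. For an $r\times r$ submatrix of $A$ with row index set $I$ and column index set $J$, each bijection $\rho:I\to J$ gives a monomial $\prod_{i\in I}X_{i,\rho(i)}$ in commuting variables subject to $X_{i,j}=X_{j,i}$, with value $\sum_{i\in I}A_{i,\rho(i)}$; the submatrix is symmetrically tropically singular if the minimum value is attained by at least two distinct monomials. The symmetric tropical rank of $A$ is the largest $r$ such that $A$ has an $r\times r$ submatrix that is not symmetrically tropically singular. The $r\times r$ minors form a tropical basis if for every real symmetric $n\times n$ $A$: all $r\times r$ submatrices are symmetrically tropically singular iff $A$ has a symmetric lift of rank $\le r-1$. *)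

theory Defs
  imports "HOL-Analysis.Analysis" "HOL-Library.Multiset"
begin

text \<open>A Hahn series sum c_a t^a is represented by its coefficient function
  real => complex; it must have well-ordered support.\<close>

definition hsupp :: "(real \<Rightarrow> complex) \<Rightarrow> real set" where
  "hsupp f = {x. f x \<noteq> 0}"

definition hahn :: "(real \<Rightarrow> complex) \<Rightarrow> bool" where
  "hahn f \<longleftrightarrow> (\<forall>S. S \<subseteq> hsupp f \<longrightarrow> S \<noteq> {} \<longrightarrow> (\<exists>m\<in>S. \<forall>x\<in>S. m \<le> x))"

text \<open>Multiplication (Cauchy product); the index set is finite for Hahn series.\<close>
definition hmul :: "(real \<Rightarrow> complex) \<Rightarrow> (real \<Rightarrow> complex) \<Rightarrow> (real \<Rightarrow> complex)" where
  "hmul f g = (\<lambda>c. \<Sum>a\<in>{a. f a \<noteq> 0 \<and> g (c - a) \<noteq> 0}. f a * g (c - a))"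

text \<open>Degree: smallest exponent with nonzero coefficient (meaningful for nonzero series).\<close>
definition hdeg :: "(real \<Rightarrow> complex) \<Rightarrow> real" where
  "hdeg f = (LEAST x. f x \<noteq> 0)"

text \<open>Matrices are functions nat => nat => entry, only indices < n matter.
  rank M <= r iff M = U V with U an n x r and V an r x n matrix over the field.\<close>
definition hahn_rank_le :: "nat \<Rightarrow> (nat \<Rightarrow> nat \<Rightarrow> real \<Rightarrow> complex) \<Rightarrow> nat \<Rightarrow> bool" where
  "hahn_rank_le n M r \<longleftrightarrow>
     (\<exists>U V. (\<forall>i k. hahn (U i k)) \<and> (\<forall>k j. hahn (V k j)) \<and>
        (\<forall>i<n. \<forall>j<n. M i j = (\<lambda>c. \<Sum>k<r. hmul (U i k) (V k j) c)))"

definition hahn_rank :: "nat \<Rightarrow> (nat \<Rightarrow> nat \<Rightarrow> real \<Rightarrow> complex) \<Rightarrow> nat" where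
  "hahn_rank n M = (LEAST r. hahn_rank_le n M r)"

definition sym_lift :: "nat \<Rightarrow> (nat \<Rightarrow> nat \<Rightarrow> real) \<Rightarrow> (nat \<Rightarrow> nat \<Rightarrow> real \<Rightarrow> complex) \<Rightarrow> bool" where
  "sym_lift n A L \<longleftrightarrow>
     (\<forall>i<n. \<forall>j<n. hahn (L i j) \<and> L i j \<noteq> (\<lambda>_. 0) \<and> L i j = L j i \<and> hdeg (L i j) = A i j)"

definition sym_kapranov_rank :: "nat \<Rightarrow> (nat \<Rightarrow> nat \<Rightarrow> real) \<Rightarrow> nat" where
  "sym_kapranov_rank n A = (LEAST r. \<exists>L. sym_lift n A L \<and> hahn_rank n L = r)"

text \<open>The monomial prod_{i in I} X_{i, rho i} with X_{i,j} = X_{j,i}, as a multiset of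
  unordered index pairs (stored as (min, max)).\<close>
definition sym_monomial :: "nat set \<Rightarrow> (nat \<Rightarrow> nat) \<Rightarrow> (nat \<times> nat) multiset" where
  "sym_monomial I \<rho> = image_mset (\<lambda>i. (min i (\<rho> i), max i (\<rho> i))) (mset_set I)"

definition trop_value :: "(nat \<Rightarrow> nat \<Rightarrow> real) \<Rightarrow> nat set \<Rightarrow> (nat \<Rightarrow> nat) \<Rightarrow> real" where
  "trop_value A I \<rho> = (\<Sum>i\<in>I. A i (\<rho> i))"

definition sym_trop_singular :: "(nat \<Rightarrow> nat \<Rightarrow> real) \<Rightarrow> nat set \<Rightarrow> nat set \<Rightarrow> bool" where
  "sym_trop_singular A I J \<longleftrightarrow>
     (\<exists>\<rho>1 \<rho>2. bij_betw \<rho>1 I J \<and> bij_betw \<rho>2 I J \<and>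
        sym_monomial I \<rho>1 \<noteq> sym_monomial I \<rho>2 \<and>
        trop_value A I \<rho>1 = trop_value A I \<rho>2 \<and>
        (\<forall>\<rho>. bij_betw \<rho> I J \<longrightarrow> trop_value A I \<rho>1 \<le> trop_value A I \<rho>))"

definition sym_trop_rank :: "nat \<Rightarrow> (nat \<Rightarrow> nat \<Rightarrow> real) \<Rightarrow> nat" where
  "sym_trop_rank n A = (GREATEST r. \<exists>I J. I \<subseteq> {..<n} \<and> J \<subseteq> {..<n} \<and>
      card I = r \<and> card J = r \<and> \<not> sym_trop_singular A I J)"

end

theory Submission
  imports Defs
begin

definition dl :: "real \<Rightarrow> real \<Rightarrow> complex" where
  "dl a = (\<lambda>x. if x = a then 1 else 0)"

lemma hahn_dl: "hahn (dl a)"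
  unfolding hahn_def hsupp_def dl_def
  by (metis (mono_tags, lifting) equals0I mem_Collect_eq subset_iff order_refl)

lemma hahn_zero: "hahn (\<lambda>_. 0)"
  unfolding hahn_def hsupp_def by auto

lemma hdeg_props:
  assumes "hahn f" "f \<noteq> (\<lambda>_. 0)"
  shows "f (hdeg f) \<noteq> 0" "\<And>x. f x \<noteq> 0 \<Longrightarrow> hdeg f \<le> x"
proof -
  have ne: "hsupp f \<noteq> {}" using assms(2) unfolding hsupp_def by auto
  obtain m where m: "m \<in> hsupp f" "\<forall>x\<in>hsupp f. m \<le> x"
    using assms(1) ne unfolding hahn_def by blast
  have "hdeg f = m" unfolding hdeg_def
    by (rule Least_equality) (use m in \<open>auto simp: hsupp_def\<close>)
  then show "f (hdeg f) \<noteq> 0" "\<And>x. f x \<noteq> 0 \<Longrightarrow> hdeg f \<le> x"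
    using m by (auto simp: hsupp_def)
qed

lemma hdeg_dl: "hdeg (dl a) = a"
  unfolding hdeg_def dl_def by (rule Least_equality) (auto split: if_splits)

lemma dl_nz: "dl a \<noteq> (\<lambda>_. 0)"
  unfolding dl_def by (metis one_neq_zero)

lemma hmul_zero_right: "hmul f (\<lambda>_. 0) = (\<lambda>_. 0)"
  unfolding hmul_def by auto

lemma hmul_zero_left: "hmul (\<lambda>_. 0) f = (\<lambda>_. 0)"
  unfolding hmul_def by auto

lemma hmul_dl0: "hmul f (dl 0) = f"
proof
  fix c
  have "{a. f a \<noteq> 0 \<and> dl 0 (c - a) \<noteq> 0} = (if f c \<noteq> 0 then {c} else {})"
    by (auto simp: dl_def)
  then show "hmul f (dl 0) c = f c" unfolding hmul_def by (auto simp: dl_def)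
qed

lemma hmul_dl: "hmul (dl a) (dl b) = dl (a + b)"
proof
  fix c
  have "{x. dl a x \<noteq> 0 \<and> dl b (c - x) \<noteq> 0} = (if c = a + b then {a} else {})"
    by (auto simp: dl_def)
  then show "hmul (dl a) (dl b) c = dl (a + b) c" unfolding hmul_def by (auto simp: dl_def)
qed

lemma hmul_deg:
  assumes "hahn f" "hahn g" "f \<noteq> (\<lambda>_. 0)" "g \<noteq> (\<lambda>_. 0)"
  shows "hmul f g \<noteq> (\<lambda>_. 0) \<and> hdeg (hmul f g) = hdeg f + hdeg g"
proof -
  note F = hdeg_props[OF assms(1,3)] and G = hdeg_props[OF assms(2,4)]
  have S: "{a. f a \<noteq> 0 \<and> g (hdeg f + hdeg g - a) \<noteq> 0} = {hdeg f}"
  proof (safe)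
    fix a assume "f a \<noteq> 0" "g (hdeg f + hdeg g - a) \<noteq> 0"
    then have "hdeg f \<le> a" "hdeg g \<le> hdeg f + hdeg g - a" using F G by auto
    then show "a = hdeg f" by linarith
  qed (use F G in auto)
  have v: "hmul f g (hdeg f + hdeg g) \<noteq> 0"
    unfolding hmul_def S using F G by simp
  have lo: "hdeg f + hdeg g \<le> c" if "hmul f g c \<noteq> 0" for c
  proof -
    have "{a. f a \<noteq> 0 \<and> g (c - a) \<noteq> 0} \<noteq> {}"
      using that unfolding hmul_def by (metis sum.empty)
    then obtain a where "f a \<noteq> 0" "g (c - a) \<noteq> 0" by auto
    then have "hdeg f \<le> a" "hdeg g \<le> c - a" using F G by auto
    then show ?thesis by linarith
  qed
  have "hdeg (hmul f g) = (LEAST x. hmul f g x \<noteq> 0)" by (simp add: hdeg_def)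
  also have "\<dots> = hdeg f + hdeg g"
    by (rule Least_equality) (use v lo in auto)
  finally have "hdeg (hmul f g) = hdeg f + hdeg g" .
  moreover have "hmul f g \<noteq> (\<lambda>_. 0)" using v by metis
  ultimately show ?thesis by simp
qed

lemma pr_eq: "(min (i::nat) x, max i x) = (min i y, max i y) \<Longrightarrow> x = y"
  by (simp add: min_def max_def split: if_splits)

lemma pr_eq2: "(min (i::nat) x, max i x) = (min j x, max j x) \<Longrightarrow> i = j"
  by (simp add: min_def max_def split: if_splits)

lemma two_eq: "{#a, b#} = {#c, d#} \<Longrightarrow> (a = c \<and> b = d) \<or> (a = d \<and> b = c)"
  by (auto simp: add_eq_conv_ex)

lemma sing_of_sum:
  assumes AS: "\<forall>i<n. \<forall>j<n. A i j = p i + q j" and IJ: "I \<subseteq> {..<n}" "J \<subseteq> {..<n}"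
    and cd: "card I = card J" "card I \<ge> 2"
  shows "sym_trop_singular A I J"
proof -
  have fI: "finite I" and fJ: "finite J" using IJ finite_subset by auto
  obtain \<rho> where rho: "bij_betw \<rho> I J" using finite_same_card_bij[OF fI fJ cd(1)] by blast
  obtain i where i: "i \<in> I" using cd(2) by fastforce
  have "card (I - {i}) \<ge> 1" using cd(2) i fI by simp
  then have "I - {i} \<noteq> {}" by (metis card.empty not_one_le_zero)
  then obtain j where j: "j \<in> I" "j \<noteq> i" by blast
  define sw where "sw x = (if x = i then j else if x = j then i else x)" for x
  have bsw: "bij_betw sw I I"
    by (rule bij_betw_byWitness[where f'=sw]) (use i j in \<open>auto simp: sw_def\<close>)
  define \<rho>2 where "\<rho>2 = \<rho> \<circ> sw"
  have rho2: "bij_betw \<rho>2 I J" unfolding \<rho>2_def using bij_betw_trans[OF bsw rho] .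
  have val: "trop_value A I \<sigma> = sum p I + sum q J" if s: "bij_betw \<sigma> I J" for \<sigma>
  proof -
    have "trop_value A I \<sigma> = (\<Sum>x\<in>I. p x + q (\<sigma> x))"
      unfolding trop_value_def
      by (rule sum.cong[OF refl]) (metis AS IJ bij_betwE[OF s] lessThan_iff subsetD)
    also have "\<dots> = sum p I + (\<Sum>x\<in>I. q (\<sigma> x))" by (simp add: sum.distrib)
    also have "(\<Sum>x\<in>I. q (\<sigma> x)) = sum q J" by (rule sum.reindex_bij_betw[OF s])
    finally show ?thesis .
  qed
  let ?R = "I - {i, j}"
  have Isplit: "mset_set I = mset_set ?R + {#i, j#}"
  proof -
    have e: "I = ?R \<union> {i, j}" using i j by auto
    have "mset_set (?R \<union> {i, j}) = mset_set ?R + mset_set {i, j}"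
      by (rule mset_set_Union) (use fI in auto)
    then have "mset_set I = mset_set ?R + mset_set {i, j}" using e by simp
    then show ?thesis using j by simp
  qed
  have rest: "image_mset (\<lambda>x. (min x (\<rho> x), max x (\<rho> x))) (mset_set ?R)
      = image_mset (\<lambda>x. (min x (\<rho>2 x), max x (\<rho>2 x))) (mset_set ?R)"
    by (rule image_mset_cong) (use fI in \<open>auto simp: \<rho>2_def sw_def\<close>)
  have inj: "\<rho> i \<noteq> \<rho> j" using rho i j by (metis bij_betw_def inj_on_def)
  have mono: "sym_monomial I \<rho> \<noteq> sym_monomial I \<rho>2"
  proof
    assume "sym_monomial I \<rho> = sym_monomial I \<rho>2"
    then have "{#(min i (\<rho> i), max i (\<rho> i)), (min j (\<rho> j), max j (\<rho> j))#}
       = {#(min i (\<rho>2 i), max i (\<rho>2 i)), (min j (\<rho>2 j), max j (\<rho>2 j))#}"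
      unfolding sym_monomial_def Isplit image_mset_union rest by (simp, metis add_mset_commute)
    moreover have "\<rho>2 i = \<rho> j" "\<rho>2 j = \<rho> i" using j by (auto simp: \<rho>2_def sw_def)
    ultimately have "{#(min i (\<rho> i), max i (\<rho> i)), (min j (\<rho> j), max j (\<rho> j))#}
       = {#(min i (\<rho> j), max i (\<rho> j)), (min j (\<rho> i), max j (\<rho> i))#}" by simp
    then show False using two_eq pr_eq pr_eq2 inj j by metis
  qed
  show ?thesis unfolding sym_trop_singular_def
    by (intro exI[of _ \<rho>] exI[of _ \<rho>2] conjI allI impI) (simp_all add: rho rho2 mono val)
qed


abbreviation S2 :: "nat \<Rightarrow> (nat \<Rightarrow> nat \<Rightarrow> real) \<Rightarrow> bool" where
  "S2 n A \<equiv> (\<forall>I J. I \<subseteq> {..<n} \<and> J \<subseteq> {..<n} \<and> card I = 2 \<and> card J = 2 \<longrightarrow>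
        sym_trop_singular A I J)"

lemma bij2:
  assumes "bij_betw \<rho> {i, j} {i, j}" "i \<noteq> (j::nat)"
  shows "(\<rho> i = i \<and> \<rho> j = j) \<or> (\<rho> i = j \<and> \<rho> j = i)"
proof -
  have "\<rho> i \<in> {i, j}" "\<rho> j \<in> {i, j}" using assms(1) by (auto dest: bij_betwE)
  moreover have "\<rho> i \<noteq> \<rho> j" using assms by (metis bij_betw_def inj_on_def insertI1 insert_subset subset_insertI)
  ultimately show ?thesis by auto
qed

lemma S2_form:
  assumes symA: "\<forall>i<n. \<forall>j<n. A i j = A j i" and S: "S2 n A" and ij: "i < n" "j < n"
  shows "A i j = A i i / 2 + A j j / 2"
proof (cases "i = j")
  case True then show ?thesis by simp
next
  case False
  have "card {i, j} = 2" using False by simp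
  then have "sym_trop_singular A {i, j} {i, j}" using S ij by auto
  then obtain \<rho>1 \<rho>2 where r: "bij_betw \<rho>1 {i, j} {i, j}" "bij_betw \<rho>2 {i, j} {i, j}"
    "sym_monomial {i, j} \<rho>1 \<noteq> sym_monomial {i, j} \<rho>2"
    "trop_value A {i, j} \<rho>1 = trop_value A {i, j} \<rho>2"
    unfolding sym_trop_singular_def by blast
  have mon: "sym_monomial {i, j} \<rho> = {#(min i (\<rho> i), max i (\<rho> i)), (min j (\<rho> j), max j (\<rho> j))#}" for \<rho>
    using False by (simp add: sym_monomial_def)
  have val: "trop_value A {i, j} \<rho> = A i (\<rho> i) + A j (\<rho> j)" for \<rho>
    using False by (simp add: trop_value_def)
  have "A i i + A j j = A i j + A j i"
    using bij2[OF r(1) False] bij2[OF r(2) False] r(3,4) unfolding mon val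
    by (auto simp: add_mset_commute)
  moreover have "A j i = A i j" using symA ij by auto
  ultimately show ?thesis by simp
qed

lemma S2_R1:
  assumes symA: "\<forall>i<n. \<forall>j<n. A i j = A j i" and S: "S2 n A"
  shows "\<exists>L. sym_lift n A L \<and> hahn_rank_le n L 1"
proof -
  define L where "L = (\<lambda>i j. dl (A i j))"
  have sl: "sym_lift n A L" unfolding sym_lift_def L_def
    using symA by (auto simp: hahn_dl dl_nz hdeg_dl)
  define U :: "nat \<Rightarrow> nat \<Rightarrow> real \<Rightarrow> complex" where "U = (\<lambda>i k. dl (A i i / 2))"
  define V :: "nat \<Rightarrow> nat \<Rightarrow> real \<Rightarrow> complex" where "V = (\<lambda>k j. dl (A j j / 2))"
  have "hahn_rank_le n L 1" unfolding hahn_rank_le_def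
  proof (rule exI[of _ U], rule exI[of _ V], intro conjI allI impI)
    show "hahn (U i k)" for i k by (simp add: U_def hahn_dl)
    show "hahn (V k j)" for k j by (simp add: V_def hahn_dl)
    fix i j assume ij: "i < n" "j < n"
    show "L i j = (\<lambda>c. \<Sum>k<1. hmul (U i k) (V k j) c)"
      using S2_form[OF symA S ij] by (simp add: L_def U_def V_def hmul_dl)
  qed
  with sl show ?thesis by blast
qed

lemma R1_S2:
  assumes "\<exists>L. sym_lift n A L \<and> hahn_rank_le n L 1"
  shows "S2 n A"
proof -
  obtain L and U V :: "nat \<Rightarrow> nat \<Rightarrow> real \<Rightarrow> complex" where L: "sym_lift n A L" and U: "\<forall>i k. hahn (U i k)" and V: "\<forall>k j. hahn (V k j)"
    and E: "\<forall>i<n. \<forall>j<n. L i j = (\<lambda>c. \<Sum>k<1. hmul (U i k) (V k j) c)"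
    using assms unfolding hahn_rank_le_def by blast
  have E1: "L i j = hmul (U i 0) (V 0 j)" if "i < n" "j < n" for i j
    using E that by auto
  have Unz: "U i 0 \<noteq> (\<lambda>_. 0)" if "i < n" for i
    using E1[OF that that] L that hmul_zero_left unfolding sym_lift_def by metis
  have Vnz: "V 0 j \<noteq> (\<lambda>_. 0)" if "j < n" for j
    using E1[OF that that] L that hmul_zero_right unfolding sym_lift_def by metis
  have form: "\<forall>i<n. \<forall>j<n. A i j = hdeg (U i 0) + hdeg (V 0 j)"
  proof (intro allI impI)
    fix i j assume ij: "i < n" "j < n"
    have "A i j = hdeg (L i j)" using L ij unfolding sym_lift_def by auto
    also have "\<dots> = hdeg (U i 0) + hdeg (V 0 j)"
      using E1[OF ij] hmul_deg[OF U[rule_format] V[rule_format] Unz[OF ij(1)] Vnz[OF ij(2)]] by simp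
    finally show "A i j = hdeg (U i 0) + hdeg (V 0 j)" .
  qed
  show ?thesis using sing_of_sum[OF form] by auto
qed

lemma main2:
  assumes symA: "\<forall>i<n. \<forall>j<n. A i j = A j i"
  shows "S2 n A \<longleftrightarrow> (\<exists>L. sym_lift n A L \<and> hahn_rank_le n L 1)"
  using S2_R1[OF symA] R1_S2 by blast

lemma trop_rank1:
  assumes symA: "\<forall>i<n. \<forall>j<n. A i j = A j i"
  shows "sym_trop_rank n A = 1 \<longleftrightarrow> n \<ge> 1 \<and> S2 n A"
proof -
  define P where "P r \<longleftrightarrow> (\<exists>I J. I \<subseteq> {..<n} \<and> J \<subseteq> {..<n} \<and>
      card I = r \<and> card J = r \<and> \<not> sym_trop_singular A I J)" for r
  have R: "sym_trop_rank n A = Greatest P" unfolding sym_trop_rank_def P_def by simp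
  have bound: "\<forall>y. P y \<longrightarrow> y \<le> n"
  proof (intro allI impI)
    fix y assume "P y"
    then obtain I where "I \<subseteq> {..<n}" "card I = y" unfolding P_def by blast
    then show "y \<le> n" by (metis card_lessThan card_mono finite_lessThan)
  qed
  have P0: "P 0" unfolding P_def
    by (rule exI[of _ "{}"], rule exI[of _ "{}"]) (simp add: sym_trop_singular_def sym_monomial_def)
  show ?thesis
  proof
    assume r1: "sym_trop_rank n A = 1"
    have n1: "n \<ge> 1"
    proof (rule ccontr)
      assume "\<not> n \<ge> 1"
      then have "Greatest P = 0" using bound P0 by (intro Greatest_equality) auto
      then show False using r1 R by simp
    qed
    have "S2 n A"
    proof (rule ccontr)
      assume "\<not> S2 n A"
      then have "P 2" unfolding P_def by blast
      then have "2 \<le> Greatest P" using Greatest_le_nat bound by blast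
      then show False using r1 R by simp
    qed
    then show "n \<ge> 1 \<and> S2 n A" using n1 by simp
  next
    assume a: "n \<ge> 1 \<and> S2 n A"
    have P1: "P 1" unfolding P_def
    proof (rule exI[of _ "{0}"], rule exI[of _ "{0}"], intro conjI)
      show "{0} \<subseteq> {..<n}" using a by auto
      show "\<not> sym_trop_singular A {0} {0}"
      proof
        assume "sym_trop_singular A {0} {0}"
        then obtain \<rho>1 \<rho>2 where "bij_betw \<rho>1 {0} {0}" "bij_betw \<rho>2 {0} {0}"
          "sym_monomial {0} \<rho>1 \<noteq> sym_monomial {0} \<rho>2"
          unfolding sym_trop_singular_def by blast
        then show False by (auto simp: sym_monomial_def dest: bij_betwE)
      qed
    qed (use a in auto)
    have "Greatest P = 1"
    proof (rule Greatest_equality)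
      show "P 1" by (rule P1)
    next
      fix y assume "P y"
      then obtain I J where IJ: "I \<subseteq> {..<n}" "J \<subseteq> {..<n}" "card I = y" "card J = y"
        "\<not> sym_trop_singular A I J" unfolding P_def by blast
      show "y \<le> 1"
      proof (rule ccontr)
        assume "\<not> y \<le> 1"
        have form: "\<forall>i<n. \<forall>j<n. A i j = A i i / 2 + A j j / 2"
          using S2_form[OF symA] a by blast
        have "sym_trop_singular A I J"
          by (rule sing_of_sum[OF form IJ(1,2)]) (use IJ \<open>\<not> y \<le> 1\<close> in auto)
        then show False using IJ by blast
      qed
    qed
    then show "sym_trop_rank n A = 1" using R by simp
  qed
qed

lemma rank_exists:
  assumes "\<forall>i<n. \<forall>j<n. hahn (L i j)"
  shows "hahn_rank_le n L n"
  unfolding hahn_rank_le_def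
proof (intro exI conjI allI impI)
  show "hahn ((\<lambda>i k. if i < n \<and> k < n then L i k else (\<lambda>_. 0)) i k)" for i k
    using assms hahn_zero by auto
  show "hahn ((\<lambda>k j. if k = j then dl 0 else (\<lambda>_. 0)) k j)" for k j
    using hahn_zero hahn_dl by auto
  fix i j assume ij: "i < n" "j < n"
  show "L i j = (\<lambda>c. \<Sum>k<n. hmul ((\<lambda>i k. if i < n \<and> k < n then L i k else (\<lambda>_. 0)) i k)
      ((\<lambda>k j. if k = j then dl 0 else (\<lambda>_. 0)) k j) c)"
  proof
    fix c
    have "(\<Sum>k<n. hmul ((\<lambda>i k. if i < n \<and> k < n then L i k else (\<lambda>_. 0)) i k)
      ((\<lambda>k j. if k = j then dl 0 else (\<lambda>_. 0)) k j) c) = (\<Sum>k<n. if k = j then L i j c else 0)"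
      by (rule sum.cong[OF refl]) (use ij in \<open>auto simp: hmul_dl0 hmul_zero_right\<close>)
    also have "\<dots> = L i j c" using ij by simp
    finally show "L i j c = (\<Sum>k<n. hmul ((\<lambda>i k. if i < n \<and> k < n then L i k else (\<lambda>_. 0)) i k)
      ((\<lambda>k j. if k = j then dl 0 else (\<lambda>_. 0)) k j) c)" by simp
  qed
qed

lemma kap_rank1:
  assumes symA: "\<forall>i<n. \<forall>j<n. A i j = A j i"
  shows "sym_kapranov_rank n A = 1 \<longleftrightarrow> n \<ge> 1 \<and> (\<exists>L. sym_lift n A L \<and> hahn_rank_le n L 1)"
proof -
  define Q where "Q r \<longleftrightarrow> (\<exists>L. sym_lift n A L \<and> hahn_rank n L = r)" for r
  have K: "sym_kapranov_rank n A = Least Q" unfolding sym_kapranov_rank_def Q_def by simp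
  have rl: "hahn_rank_le n L (hahn_rank n L)" if "sym_lift n A L" for L
    unfolding hahn_rank_def
    by (rule LeastI[of _ n], rule rank_exists) (use that in \<open>auto simp: sym_lift_def\<close>)
  define L0 where "L0 = (\<lambda>i j. dl (A i j))"
  have L0: "sym_lift n A L0" unfolding sym_lift_def L0_def
    using symA by (auto simp: hahn_dl dl_nz hdeg_dl)
  have Qex: "\<exists>r. Q r" using L0 unfolding Q_def by blast
  obtain L' where L': "sym_lift n A L'" "hahn_rank n L' = Least Q"
    using LeastI_ex[OF Qex] unfolding Q_def by blast
  have rl': "hahn_rank_le n L' (Least Q)" using rl[OF L'(1)] L'(2) by simp
  show ?thesis
  proof
    assume k1: "sym_kapranov_rank n A = 1"
    have n1: "n \<ge> 1"
    proof (rule ccontr)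
      assume "\<not> n \<ge> 1"
      then have n0: "n = 0" by simp
      have "hahn_rank_le n L0 0" unfolding hahn_rank_le_def
        by (rule exI[of _ "\<lambda>_ _ _. 0"], rule exI[of _ "\<lambda>_ _ _. 0"]) (simp add: n0 hahn_zero)
      then have "hahn_rank n L0 \<le> 0" unfolding hahn_rank_def by (rule Least_le)
      then have "Q 0" using L0 unfolding Q_def by auto
      then have "Least Q \<le> 0" by (rule Least_le)
      then show False using k1 K by simp
    qed
    then show "n \<ge> 1 \<and> (\<exists>L. sym_lift n A L \<and> hahn_rank_le n L 1)"
      using L'(1) rl' k1 K by auto
  next
    assume a: "n \<ge> 1 \<and> (\<exists>L. sym_lift n A L \<and> hahn_rank_le n L 1)"
    then obtain L where L: "sym_lift n A L" "hahn_rank_le n L 1" by blast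
    have "hahn_rank n L \<le> 1" unfolding hahn_rank_def using L(2) by (rule Least_le)
    moreover have "Q (hahn_rank n L)" using L(1) unfolding Q_def by blast
    ultimately have le: "Least Q \<le> 1" using Least_le[of Q] by (meson order_trans)
    have "Least Q \<noteq> 0"
    proof
      assume z: "Least Q = 0"
      then have "hahn_rank_le n L' 0" using rl' by simp
      then have "L' 0 0 = (\<lambda>_. 0)" using a unfolding hahn_rank_le_def by auto
      then show False using L'(1) a unfolding sym_lift_def by auto
    qed
    then show "sym_kapranov_rank n A = 1" using le K by simp
  qed
qed

theorem theorem5:
  fixes n :: nat and A :: "nat \<Rightarrow> nat \<Rightarrow> real"
  assumes symA: "\<forall>i<n. \<forall>j<n. A i j = A j i"
  shows "(sym_trop_rank n A = 1 \<longleftrightarrow> sym_kapranov_rank n A = 1) \<and>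
    ((\<forall>I J. I \<subseteq> {..<n} \<and> J \<subseteq> {..<n} \<and> card I = 2 \<and> card J = 2 \<longrightarrow>
        sym_trop_singular A I J)
     \<longleftrightarrow> (\<exists>L. sym_lift n A L \<and> hahn_rank_le n L 1))"
  using trop_rank1[OF symA] kap_rank1[OF symA] main2[OF symA] by blast

end
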